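(* Let $Z\subset\mathbb R^n$ be a convex and compact set. For every $y\in Z\setminus\partial Z$ there exists an extreme point $x$ of $Z$ such that $b(y)=t_y(x)$.
   Context: For $x,y\in Z$ write $x\leq_C y$ if there exist $z\in Z$ and $0<t\leq 1$ with $y=tx+(1-t)z$. The (algebraic) boundary $\partial Z$ is the set of $y\in Z$ for which there exists $x\in Z$ with $x\not\leq_C y$. The weight function is $t_y(x)=\sup\{0\leq t<1 : \frac{y-tx}{1-t}\in Z\}$ for $x,y\in Z$, and the boundariness of $y\in Z$ is $b(y)=\inf_{x\in Z}t_y(x)$. *)

theory Defs
  imports "HOL-Analysis.Analysis"
begin

definition conv_le :: "'a::real_vector set \<Rightarrow> 'a \<Rightarrow> 'a \<Rightarrow> bool" where
  "conv_le Z x y \<longleftrightarrow> (\<exists>z\<in>Z. \<exists>t::real. 0 < t \<and> t \<le> 1 \<and> y = t *\<^sub>R x + (1 - t) *\<^sub>R z)"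

definition alg_boundary :: "'a::real_vector set \<Rightarrow> 'a set" where
  "alg_boundary Z = {y\<in>Z. \<exists>x\<in>Z. \<not> conv_le Z x y}"

definition weight :: "'a::real_vector set \<Rightarrow> 'a \<Rightarrow> 'a \<Rightarrow> real" where
  "weight Z y x = Sup {t::real. 0 \<le> t \<and> t < 1 \<and> (1 / (1 - t)) *\<^sub>R (y - t *\<^sub>R x) \<in> Z}"

definition boundariness :: "'a::real_vector set \<Rightarrow> 'a \<Rightarrow> real" where
  "boundariness Z y = (INF x\<in>Z. weight Z y x)"

end

theory Submission
  imports Defs
begin

lemma g_eq: fixes y x :: "'a::real_vector" assumes "t \<noteq> 1"
  shows "(1/(1-t)) *\<^sub>R (y - t *\<^sub>R x) = y + (t/(1-t)) *\<^sub>R (y - x)"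
proof -
  define c where "c = 1/(1-t)"
  have h: "t/(1-t) = c - 1" "t * c = c - 1" using assms unfolding c_def by (auto simp add: field_simps)
  have "(1/(1-t)) *\<^sub>R (y - t *\<^sub>R x) = c *\<^sub>R y - (t * c) *\<^sub>R x"
    unfolding c_def by (simp add: algebra_simps)
  also have "\<dots> = y + (c - 1) *\<^sub>R (y - x)" unfolding h by (simp add: algebra_simps)
  finally show ?thesis using h by simp
qed

definition AA :: "'a::real_vector set \<Rightarrow> 'a \<Rightarrow> 'a \<Rightarrow> real set" where
  "AA Z y x = {t::real. 0 \<le> t \<and> t < 1 \<and> y + (t/(1-t)) *\<^sub>R (y - x) \<in> Z}"

lemma weight_AA: "weight Z y x = Sup (AA Z y x)"
  unfolding weight_def AA_def by (rule arg_cong[where f=Sup]) (auto simp: g_eq)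

lemma AA0: "y \<in> Z \<Longrightarrow> 0 \<in> AA Z y x" by (simp add: AA_def)
lemma AA_bdd: "bdd_above (AA Z y x)" unfolding AA_def bdd_above_def by (rule exI[of _ 1]) auto
lemma AA_ne: "y \<in> Z \<Longrightarrow> AA Z y x \<noteq> {}" using AA0 by blast

lemma weight_ge0: "y \<in> Z \<Longrightarrow> 0 \<le> weight Z y x"
  unfolding weight_AA by (rule cSup_upper[OF AA0 AA_bdd])

lemma AA_upper: "t \<in> AA Z y x \<Longrightarrow> t \<le> weight Z y x"
  unfolding weight_AA by (rule cSup_upper[OF _ AA_bdd])

lemma AA_down:
  assumes "convex Z" "y \<in> Z" "t \<in> AA Z y x" "0 \<le> s" "s \<le> t"
  shows "s \<in> AA Z y x"
proof (cases "s = 0")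
  case True then show ?thesis using AA0 assms by simp
next
  case False
  have t: "0 < t" "t < 1" "y + (t/(1-t)) *\<^sub>R (y - x) \<in> Z" using assms False unfolding AA_def by auto
  define a where "a = s/(1-s)"
  define b where "b = t/(1-t)"
  have ab: "0 < a" "a \<le> b" "0 < b" using assms t False unfolding a_def b_def
    by (auto simp: field_simps intro!: divide_pos_pos frac_le)
  have "(1 - a/b) *\<^sub>R y + (a/b) *\<^sub>R (y + b *\<^sub>R (y - x)) \<in> Z"
    using convexD[OF assms(1) assms(2) t(3)[folded b_def], of "1 - a/b" "a/b"] ab
    by (simp add: field_simps)
  also have "(1 - a/b) *\<^sub>R y + (a/b) *\<^sub>R (y + b *\<^sub>R (y - x)) = y + a *\<^sub>R (y - x)"
    using ab by (simp add: algebra_simps)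
  finally show ?thesis using assms t unfolding AA_def a_def by auto
qed

lemma lt_weight:
  assumes "convex Z" "y \<in> Z" "0 \<le> s" "s < weight Z y x"
  shows "s \<in> AA Z y x"
proof -
  obtain t where "t \<in> AA Z y x" "s < t"
    using assms(4) unfolding weight_AA using less_cSup_iff[OF AA_ne[OF assms(2)] AA_bdd] by blast
  then show ?thesis using AA_down[OF assms(1,2)] assms(3) by auto
qed

lemma AA_mix:
  assumes "convex Z" "t \<in> AA Z y a" "t \<in> AA Z y b" "0 \<le> l" "l \<le> 1"
  shows "t \<in> AA Z y (l *\<^sub>R a + (1-l) *\<^sub>R b)"
proof -
  define c where "c = t/(1-t)"
  have "l *\<^sub>R (y + c *\<^sub>R (y - a)) + (1-l) *\<^sub>R (y + c *\<^sub>R (y - b)) \<in> Z"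
    using assms convexD[OF assms(1)] unfolding AA_def c_def by auto
  also have "l *\<^sub>R (y + c *\<^sub>R (y - a)) + (1-l) *\<^sub>R (y + c *\<^sub>R (y - b))
      = y + c *\<^sub>R (y - (l *\<^sub>R a + (1-l) *\<^sub>R b))" by (simp add: algebra_simps)
  finally show ?thesis using assms unfolding AA_def c_def by auto
qed

lemma weight_geI:
  assumes "y \<in> Z" "\<And>t. 0 \<le> t \<Longrightarrow> t < c \<Longrightarrow> t \<in> AA Z y x"
  shows "c \<le> weight Z y x"
proof (rule ccontr)
  assume neg: "\<not> c \<le> weight Z y x"
  define t where "t = (weight Z y x + c)/2"
  have "0 \<le> t" "t < c" using neg weight_ge0[OF assms(1), of x] unfolding t_def by auto
  then have "t \<le> weight Z y x" using assms(2) AA_upper by blast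
  then show False using neg unfolding t_def by auto
qed

lemma quasi:
  assumes "convex Z" "y \<in> Z" "0 \<le> l" "l \<le> 1"
  shows "min (weight Z y a) (weight Z y b) \<le> weight Z y (l *\<^sub>R a + (1-l) *\<^sub>R b)"
  by (rule weight_geI[OF assms(2)]) (intro AA_mix lt_weight assms; simp)

lemma convex_sup:
  assumes "convex Z" "y \<in> Z"
  shows "convex {x. m < weight Z y x}"
  unfolding convex_def
proof (intro ballI allI impI, simp)
  fix a b and u v :: real
  assume "m < weight Z y a" "m < weight Z y b" "0 \<le> u" "0 \<le> v" "u + v = 1"
  then have "m < min (weight Z y a) (weight Z y b)" "v = 1 - u" "u \<le> 1" by auto
  moreover have "min (weight Z y a) (weight Z y b) \<le> weight Z y (u *\<^sub>R a + (1-u) *\<^sub>R b)"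
    using quasi[OF assms, of u a b] \<open>0 \<le> u\<close> \<open>u \<le> 1\<close> by simp
  ultimately have "m < weight Z y (u *\<^sub>R a + (1-u) *\<^sub>R b)" by linarith
  then show "m < weight Z y (u *\<^sub>R a + v *\<^sub>R b)" using \<open>v = 1 - u\<close> by simp
qed

lemma open_AA:
  fixes Z :: "'a::euclidean_space set"
  assumes "convex Z" "y \<in> rel_interior Z" "x0 \<in> Z" "t \<in> AA Z y x0" "0 < s" "s < t"
  shows "\<exists>d>0. \<forall>x\<in>Z. dist x x0 < d \<longrightarrow> s \<in> AA Z y x"
proof -
  obtain r where r: "r > 0" "ball y r \<inter> affine hull Z \<subseteq> Z" and yZ: "y \<in> Z"
    using assms(2) mem_rel_interior_ball by blast
  have t: "t < 1" "y + (t/(1-t)) *\<^sub>R (y - x0) \<in> Z" using assms(4) unfolding AA_def by auto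
  define a where "a = s/(1-s)"
  define b where "b = t/(1-t)"
  have ab: "0 < a" "a < b" using assms t unfolding a_def b_def
    by (auto intro!: divide_pos_pos frac_less)
  define \<mu> where "\<mu> = a/b"
  have mu: "0 < \<mu>" "\<mu> < 1" "\<mu> * b = a" using ab unfolding \<mu>_def by auto
  define c where "c = a/(1-\<mu>)"
  have c: "c > 0" "(1-\<mu>) * c = a" using mu ab unfolding c_def by auto
  define d where "d = r/c"
  have d: "d > 0" using r c unfolding d_def by auto
  show ?thesis
  proof (intro exI[of _ d] conjI d ballI impI)
    fix x assume x: "x \<in> Z" "dist x x0 < d"
    define w where "w = y + c *\<^sub>R (x0 - x)"
    have "w \<in> affine hull Z" unfolding w_def
      by (rule mem_affine_3_minus[OF affine_affine_hull]) (use yZ x assms(3) hull_subset[of Z affine] in auto)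
    moreover have "dist y w < r"
    proof -
      have "dist y w = c * dist x x0" unfolding w_def dist_norm using c by (simp add: norm_minus_commute)
      also have "\<dots> < c * d" using x c by simp
      also have "\<dots> = r" unfolding d_def using c by simp
      finally show ?thesis .
    qed
    ultimately have wZ: "w \<in> Z" using r by auto
    have "\<mu> *\<^sub>R (y + b *\<^sub>R (y - x0)) + (1 - \<mu>) *\<^sub>R w \<in> Z"
      using convexD[OF assms(1) t(2)[folded b_def] wZ, of \<mu> "1-\<mu>"] mu by simp
    also have "\<mu> *\<^sub>R (y + b *\<^sub>R (y - x0)) + (1 - \<mu>) *\<^sub>R w
       = y + (\<mu> * b) *\<^sub>R (y - x0) + ((1 - \<mu>) * c) *\<^sub>R (x0 - x)"
      unfolding w_def by (simp add: algebra_simps)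
    also have "\<dots> = y + a *\<^sub>R (y - x)" unfolding mu(3) c(2) by (simp add: algebra_simps)
    finally show "s \<in> AA Z y x" using assms(5,6) t unfolding AA_def a_def by auto
  qed
qed


lemma relint:
  fixes Z :: "'a::euclidean_space set"
  assumes "convex Z" "y \<in> Z - alg_boundary Z"
  shows "y \<in> rel_interior Z"
proof -
  have yZ: "y \<in> Z" using assms by auto
  have cl: "\<forall>x\<in>Z. conv_le Z x y" using assms unfolding alg_boundary_def by auto
  have Zne: "Z \<noteq> {}" using yZ by auto
  show ?thesis
    unfolding convex_rel_interior_iff[OF assms(1) Zne, of y]
  proof (intro ballI)
    fix x assume x: "x \<in> Z"
    obtain z t where z: "z \<in> Z" "0 < t" "t \<le> 1" "y = t *\<^sub>R x + (1 - t) *\<^sub>R z"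
      using cl x unfolding conv_le_def by auto
    show "\<exists>e>1. (1 - e) *\<^sub>R x + e *\<^sub>R y \<in> Z"
    proof (cases "t = 1")
      case True
      then have "(1 - 2) *\<^sub>R x + (2::real) *\<^sub>R y = y" using z by (simp add: algebra_simps scaleR_2)
      then show ?thesis using yZ by (intro exI[of _ 2]) auto
    next
      case False
      define e where "e = 1/(1-t)"
      have e: "e > 1" "e * (1 - t) = 1" "e * t = e - 1" using z False unfolding e_def
        by (auto simp: field_simps)
      have "(1 - e) *\<^sub>R x + e *\<^sub>R y = (1 - e + e * t) *\<^sub>R x + (e * (1 - t)) *\<^sub>R z"
        unfolding z(4) by (simp add: algebra_simps)
      also have "\<dots> = z" unfolding e by simp
      finally show ?thesis using e z by auto
    qed
  qed
qed

theorem proposition1: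
  fixes Z :: "'a::euclidean_space set" and y :: 'a
  assumes "convex Z" and "compact Z"
    and "y \<in> Z - alg_boundary Z"
  shows "\<exists>x. x extreme_point_of Z \<and> boundariness Z y = weight Z y x"
proof -
  have yZ: "y \<in> Z" using assms by auto
  have Zne: "Z \<noteq> {}" using yZ by auto
  have ri: "y \<in> rel_interior Z" using relint assms by blast
  define m where "m = boundariness Z y"
  have bdd: "bdd_below (weight Z y ` Z)"
    using weight_ge0[OF yZ] by (auto simp: bdd_below_def)
  have m_le: "\<And>x. x \<in> Z \<Longrightarrow> m \<le> weight Z y x"
    unfolding m_def boundariness_def by (rule cINF_lower[OF bdd])
  have m0: "0 \<le> m" unfolding m_def boundariness_def
    using Zne weight_ge0[OF yZ] by (auto intro: cINF_greatest)
  have "\<forall>n. \<exists>x\<in>Z. weight Z y x < m + 1 / (real n + 1)"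
  proof
    fix n
    have "Inf (weight Z y ` Z) < m + 1 / (real n + 1)"
      unfolding m_def boundariness_def by (simp add: add_pos_pos)
    then show "\<exists>x\<in>Z. weight Z y x < m + 1 / (real n + 1)"
      using cInf_lessD[of "weight Z y ` Z"] Zne by blast
  qed
  then obtain f where f: "\<And>n. f n \<in> Z" "\<And>n. weight Z y (f n) < m + 1 / (real n + 1)"
    by metis
  obtain l r where l: "l \<in> Z" "strict_mono r" "(f \<circ> r) \<longlonglongrightarrow> l"
    using seq_compactE[OF compact_imp_seq_compact[OF assms(2)]] f(1) by metis
  have wl: "weight Z y l = m"
  proof (rule ccontr)
    assume "weight Z y l \<noteq> m"
    then have lt: "m < weight Z y l" using m_le[OF l(1)] by auto
    define t where "t = (m + weight Z y l)/2"
    have t: "m < t" "t < weight Z y l" using lt unfolding t_def by auto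
    have tA: "t \<in> AA Z y l" using lt_weight[OF assms(1) yZ _ t(2)] t m0 by auto
    define s where "s = (m + t)/2"
    have s: "m < s" "s < t" "0 < s" using t m0 unfolding s_def by auto
    obtain d where d: "d > 0" "\<forall>x\<in>Z. dist x l < d \<longrightarrow> s \<in> AA Z y x"
      using open_AA[OF assms(1) ri l(1) tA s(3) s(2)] by blast
    obtain N1 where N1: "\<forall>n\<ge>N1. dist ((f \<circ> r) n) l < d"
      using l(3) d(1) unfolding LIMSEQ_def by blast
    obtain N2 where N2: "inverse (real (Suc N2)) < s - m" using reals_Archimedean[of "s - m"] s by auto
    define n where "n = max N1 N2"
    have "dist (f (r n)) l < d" using N1 unfolding n_def by auto
    then have "s \<in> AA Z y (f (r n))" using d f(1) by auto
    then have "s \<le> weight Z y (f (r n))" by (rule AA_upper)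
    also have "\<dots> < m + 1 / (real (r n) + 1)" by (rule f(2))
    also have "\<dots> \<le> m + inverse (real (Suc N2))"
    proof -
      have "N2 \<le> r n" using seq_suble[OF l(2), of n] unfolding n_def by auto
      then show ?thesis by (simp add: inverse_eq_divide frac_le)
    qed
    finally show False using N2 by auto
  qed
  show ?thesis
  proof (rule ccontr)
    assume no: "\<not> ?thesis"
    have "{x. x extreme_point_of Z} \<subseteq> {x. m < weight Z y x}"
    proof
      fix x assume "x \<in> {x. x extreme_point_of Z}"
      then have "x extreme_point_of Z" "x \<in> Z" by (auto simp: extreme_point_of_def)
      then show "x \<in> {x. m < weight Z y x}" using no m_le[of x] unfolding m_def by force
    qed
    then have "convex hull {x. x extreme_point_of Z} \<subseteq> {x. m < weight Z y x}"
      by (rule hull_minimal) (rule convex_sup[OF assms(1) yZ])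
    then have "Z \<subseteq> {x. m < weight Z y x}" using Krein_Milman_Minkowski[OF assms(2,1)] by simp
    then show False using l(1) wl by auto
  qed
qed

end
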